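(* Let $G_N=(V,E)$ be a connected, undirected, edge-weighted graph on $N$ nodes and let $v\in V$ be the initial mutant node. Then one of the following holds: (1) $\rho^{\mathrm{Bd}}_{r=1}(G_N,v)<\rho^{\mathrm{Bd}}_{r=1}(K_N)$; (2) $\rho^{\mathrm{dB}}_{r=1}(G_N,v)<\rho^{\mathrm{dB}}_{r=1}(K_N)$; (3) $\rho^{\mathrm{Bd}}_{r=1}(G_N,v)=\rho^{\mathrm{Bd}}_{r=1}(K_N)$ and $\rho^{\mathrm{dB}}_{r=1}(G_N,v)=\rho^{\mathrm{dB}}_{r=1}(K_N)$.
   Context: Each edge $\{u,v\}$ has a positive weight $w(u,v)$ and $\deg(u)=\sum_{v} w(u,v)$. Each node is occupied by a resident (fitness 1) or a mutant (fitness $r\ge 1$); $f(u)$ is the fitness at $u$ and $F=\sum_u f(u)$. Moran Birth-death (Bd) process: each step a node $u$ is chosen with probability $f(u)/F$ and its offspring replaces a neighbor $v$ chosen with probability $w(u,v)/\deg(u)$. Moran death-Birth (dB) process: each step a uniformly random node $v$ dies and is replaced by the offspring of a neighbor $u$ chosen with probability $f(u)w(u,v)/\sum_{u'}f(u')w(u',v)$. $\rho^{\mathrm{Bd}}_r(G_N,v)$ (resp. $\rho^{\mathrm{dB}}_r(G_N,v)$) is the probability that mutants eventually occupy all nodes when initially only $v$ is a mutant. $K_N$ is the unweighted complete graph on $N$ nodes, and $\rho_r(K_N)$ denotes the fixation probability of a single mutant on $K_N$ (independent of the starting node). *)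

theory Defs
  imports Complex_Main
begin

definition wdeg :: "'a set \<Rightarrow> ('a \<Rightarrow> 'a \<Rightarrow> real) \<Rightarrow> 'a \<Rightarrow> real" where
  "wdeg V w u = (\<Sum>x\<in>V. w u x)"

definition connected_wgraph :: "'a set \<Rightarrow> ('a \<Rightarrow> 'a \<Rightarrow> real) \<Rightarrow> bool" where
  "connected_wgraph V w \<longleftrightarrow>
     (\<forall>x\<in>V. \<forall>y\<in>V. (x, y) \<in> {(a, b). a \<in> V \<and> b \<in> V \<and> w a b > 0}\<^sup>*)"

definition fitness :: "real \<Rightarrow> 'a set \<Rightarrow> 'a \<Rightarrow> real" where
  "fitness r S u = (if u \<in> S then r else 1)"

definition replace_state :: "'a set \<Rightarrow> 'a \<Rightarrow> 'a \<Rightarrow> 'a set" where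
  "replace_state S u x = (if u \<in> S then insert x S else S - {x})"

definition P_Bd :: "'a set \<Rightarrow> ('a \<Rightarrow> 'a \<Rightarrow> real) \<Rightarrow> real \<Rightarrow> 'a set \<Rightarrow> 'a set \<Rightarrow> real" where
  "P_Bd V w r S T =
     (\<Sum>u\<in>V. \<Sum>x\<in>V.
        (fitness r S u / (\<Sum>u'\<in>V. fitness r S u')) * (w u x / wdeg V w u)
        * (if replace_state S u x = T then 1 else 0))"

definition P_dB :: "'a set \<Rightarrow> ('a \<Rightarrow> 'a \<Rightarrow> real) \<Rightarrow> real \<Rightarrow> 'a set \<Rightarrow> 'a set \<Rightarrow> real" where
  "P_dB V w r S T =
     (\<Sum>x\<in>V. \<Sum>u\<in>V.
        (1 / real (card V))
        * (fitness r S u * w u x / (\<Sum>u'\<in>V. fitness r S u' * w u' x))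
        * (if replace_state S u x = T then 1 else 0))"

fun nstep :: "'a set \<Rightarrow> ('a set \<Rightarrow> 'a set \<Rightarrow> real) \<Rightarrow> nat \<Rightarrow> 'a set \<Rightarrow> 'a set \<Rightarrow> real" where
  "nstep V P 0 S T = (if S = T then 1 else 0)"
| "nstep V P (Suc n) S T = (\<Sum>S'\<in>Pow V. P S S' * nstep V P n S' T)"

text \<open>Fixation probability: probability that the (absorbing) all-mutant state V is
  eventually reached, starting from the single mutant v; since V is absorbing this is
  the limit of the probability of being in state V after n steps.\<close>
definition fix_prob :: "'a set \<Rightarrow> ('a set \<Rightarrow> 'a set \<Rightarrow> real) \<Rightarrow> 'a \<Rightarrow> real" where
  "fix_prob V P v = lim (\<lambda>n. nstep V P n {v} V)"

definition rho_Bd :: "'a set \<Rightarrow> ('a \<Rightarrow> 'a \<Rightarrow> real) \<Rightarrow> real \<Rightarrow> 'a \<Rightarrow> real" where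
  "rho_Bd V w r v = fix_prob V (P_Bd V w r) v"

definition rho_dB :: "'a set \<Rightarrow> ('a \<Rightarrow> 'a \<Rightarrow> real) \<Rightarrow> real \<Rightarrow> 'a \<Rightarrow> real" where
  "rho_dB V w r v = fix_prob V (P_dB V w r) v"

definition K_weight :: "nat \<Rightarrow> nat \<Rightarrow> real" where
  "K_weight i j = (if i \<noteq> j then 1 else 0)"

text \<open>fixation probability on K_N (starting node 0; independent of the node by symmetry)\<close>
definition rho_Bd_K :: "nat \<Rightarrow> real \<Rightarrow> real" where
  "rho_Bd_K N r = rho_Bd {0..<N} K_weight r 0"

definition rho_dB_K :: "nat \<Rightarrow> real \<Rightarrow> real" where
  "rho_dB_K N r = rho_dB {0..<N} K_weight r 0"

end

theory Submission
  imports Defs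
begin

lemma absorb_row:
  fixes P :: "'a set \<Rightarrow> 'a set \<Rightarrow> real"
  assumes fin: "finite V" and nn: "\<forall>S\<in>Pow V. \<forall>T\<in>Pow V. P S T \<ge> 0"
    and rs: "\<forall>S\<in>Pow V. (\<Sum>T\<in>Pow V. P S T) = 1"
    and A: "A \<in> Pow V" and pa: "P A A = 1"
  shows "\<forall>T\<in>Pow V - {A}. P A T = 0"
proof -
  have "(\<Sum>T\<in>Pow V. P A T) = P A A + (\<Sum>T\<in>Pow V - {A}. P A T)"
    using fin A by (simp add: sum.remove)
  then have "(\<Sum>T\<in>Pow V - {A}. P A T) = 0" using rs A pa by simp
  moreover have "finite (Pow V - {A})" using fin by simp
  ultimately show ?thesis using nn A
    by (subst (asm) sum_nonneg_eq_0_iff) auto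
qed


lemma absorb_nstep:
  fixes P :: "'a set \<Rightarrow> 'a set \<Rightarrow> real"
  assumes fin: "finite V" and nn: "\<forall>S\<in>Pow V. \<forall>T\<in>Pow V. P S T \<ge> 0"
    and rs: "\<forall>S\<in>Pow V. (\<Sum>T\<in>Pow V. P S T) = 1"
    and A: "A \<in> Pow V" and pa: "P A A = 1"
  shows "nstep V P n A B = (if A = B then 1 else 0)"
proof (induction n)
  case 0
  then show ?case by simp
next
  case (Suc n)
  have z: "\<forall>T\<in>Pow V - {A}. P A T = 0" using absorb_row[OF assms] .
  have "nstep V P (Suc n) A B = P A A * nstep V P n A B + (\<Sum>T\<in>Pow V - {A}. P A T * nstep V P n T B)"
    using fin A by (simp add: sum.remove)
  also have "(\<Sum>T\<in>Pow V - {A}. P A T * nstep V P n T B) = 0"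
    using z by simp
  finally show ?case using Suc pa by simp
qed


lemma nstep_bounds:
  fixes P :: "'a set \<Rightarrow> 'a set \<Rightarrow> real"
  assumes fin: "finite V" and nn: "\<forall>S\<in>Pow V. \<forall>T\<in>Pow V. P S T \<ge> 0"
    and rs: "\<forall>S\<in>Pow V. (\<Sum>T\<in>Pow V. P S T) = 1"
  shows "\<forall>S\<in>Pow V. 0 \<le> nstep V P n S B \<and> nstep V P n S B \<le> 1"
proof (induction n)
  case 0
  then show ?case by simp
next
  case (Suc n)
  show ?case
  proof
    fix S assume S: "S \<in> Pow V"
    have "0 \<le> (\<Sum>T\<in>Pow V. P S T * nstep V P n T B)"
      using Suc S nn by (intro sum_nonneg) auto
    moreover have "(\<Sum>T\<in>Pow V. P S T * nstep V P n T B) \<le> (\<Sum>T\<in>Pow V. P S T)"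
      using Suc S nn by (intro sum_mono) (auto intro: mult_left_le)
    ultimately show "0 \<le> nstep V P (Suc n) S B \<and> nstep V P (Suc n) S B \<le> 1"
      using rs S by simp
  qed
qed


lemma nstep_mono:
  fixes P :: "'a set \<Rightarrow> 'a set \<Rightarrow> real"
  assumes fin: "finite V" and nn: "\<forall>S\<in>Pow V. \<forall>T\<in>Pow V. P S T \<ge> 0"
    and rs: "\<forall>S\<in>Pow V. (\<Sum>T\<in>Pow V. P S T) = 1"
    and pvv: "P V V = 1"
  shows "\<forall>S\<in>Pow V. nstep V P n S V \<le> nstep V P (Suc n) S V"
proof (induction n)
  case 0
  show ?case
  proof
    fix S assume S: "S \<in> Pow V"
    show "nstep V P 0 S V \<le> nstep V P (Suc 0) S V"
    proof (cases "S = V")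
      case True
      then show ?thesis using absorb_nstep[OF fin nn rs _ pvv, of "Suc 0" V] by simp
    next
      case False
      have "0 \<le> nstep V P (Suc 0) S V" using nstep_bounds[OF fin nn rs] S by blast
      then show ?thesis using False by simp
    qed
  qed
next
  case (Suc n)
  show ?case
  proof
    fix S assume S: "S \<in> Pow V"
    have "(\<Sum>T\<in>Pow V. P S T * nstep V P n T V) \<le> (\<Sum>T\<in>Pow V. P S T * nstep V P (Suc n) T V)"
      using Suc S nn by (intro sum_mono mult_left_mono) auto
    then show "nstep V P (Suc n) S V \<le> nstep V P (Suc (Suc n)) S V" by simp
  qed
qed


lemma max_principle:
  fixes h :: "'a set \<Rightarrow> real" and P :: "'a set \<Rightarrow> 'a set \<Rightarrow> real"
  assumes fin: "finite V" and nn: "\<forall>S\<in>Pow V. \<forall>T\<in>Pow V. P S T \<ge> 0"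
    and rs: "\<forall>S\<in>Pow V. (\<Sum>T\<in>Pow V. P S T) = 1"
    and gr: "\<forall>S. S \<subseteq> V \<and> S \<noteq> {} \<and> S \<noteq> V \<longrightarrow> (\<exists>x\<in>V-S. P S (insert x S) > 0)"
    and harm: "\<forall>S\<in>Pow V. (\<Sum>T\<in>Pow V. P S T * h T) = h S"
    and hV: "h V \<le> 0" and h0: "h {} \<le> 0"
  shows "\<forall>S\<in>Pow V. h S \<le> 0"
proof -
  define m where "m = Max (h ` Pow V)"
  have finP: "finite (Pow V)" using fin by simp
  have mge: "\<And>S. S \<in> Pow V \<Longrightarrow> h S \<le> m" unfolding m_def using finP by (intro Max_ge) auto
  obtain S0 where S0: "S0 \<in> Pow V" "h S0 = m"
    unfolding m_def using finP Max_in[of "h ` Pow V"] by fastforce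
  have step: "\<And>k S. card (V - S) = k \<Longrightarrow> S \<in> Pow V \<Longrightarrow> S \<noteq> {} \<Longrightarrow> h S = m \<Longrightarrow> h V = m"
  proof -
    fix k
    show "\<And>S. card (V - S) = k \<Longrightarrow> S \<in> Pow V \<Longrightarrow> S \<noteq> {} \<Longrightarrow> h S = m \<Longrightarrow> h V = m"
    proof (induction k)
      case 0
      then have "V - S = {}" using fin by simp
      then have "S = V" using "0.prems"(2) by blast
      then show ?case using "0.prems"(4) by simp
    next
      case (Suc k)
      have SV: "S \<noteq> V" using Suc.prems(1) by (metis Diff_cancel card.empty nat.distinct(1))
      have "S \<subseteq> V \<and> S \<noteq> {} \<and> S \<noteq> V" using Suc.prems(2,3) SV by blast
      then obtain x where x: "x \<in> V - S" "P S (insert x S) > 0" using gr by blast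
      have "(\<Sum>T\<in>Pow V. P S T * (m - h T)) = m * (\<Sum>T\<in>Pow V. P S T) - (\<Sum>T\<in>Pow V. P S T * h T)"
        by (simp add: algebra_simps sum_subtractf sum_distrib_left)
      also have "\<dots> = 0" using rs harm Suc.prems by simp
      finally have s0: "(\<Sum>T\<in>Pow V. P S T * (m - h T)) = 0" .
      have ins: "insert x S \<in> Pow V" using x Suc.prems(2) by blast
      have nn2: "\<forall>T\<in>Pow V. 0 \<le> P S T * (m - h T)"
        using nn Suc.prems(2) mge by (intro ballI mult_nonneg_nonneg) auto
      have "\<forall>T\<in>Pow V. P S T * (m - h T) = 0"
        using sum_nonneg_eq_0_iff[OF finP, of "\<lambda>T. P S T * (m - h T)"] nn2 s0 by simp
      then have "P S (insert x S) * (m - h (insert x S)) = 0" using ins by blast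
      then have hi: "h (insert x S) = m" using x by simp
      have "V - insert x S = (V - S) - {x}" by auto
      then have "card (V - insert x S) = k" using Suc.prems x fin
        by (simp add: card_Diff_singleton)
      then show ?case using Suc.IH[of "insert x S"] ins hi by blast
    qed
  qed
  have "m \<le> 0"
  proof (cases "S0 = {}")
    case True then show ?thesis using S0 h0 by simp
  next
    case False then show ?thesis using step[OF refl S0(1) False S0(2)] hV by simp
  qed
  then show ?thesis using mge by (meson order_trans)
qed




lemma fix_prob_eq:
  fixes P :: "'a set \<Rightarrow> 'a set \<Rightarrow> real" and M :: "'a set \<Rightarrow> real"
  assumes fin: "finite V" and vV: "v \<in> V"
    and nn: "\<forall>S\<in>Pow V. \<forall>T\<in>Pow V. P S T \<ge> 0"
    and rs: "\<forall>S\<in>Pow V. (\<Sum>T\<in>Pow V. P S T) = 1"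
    and pvv: "P V V = 1" and p00: "P {} {} = 1"
    and gr: "\<forall>S. S \<subseteq> V \<and> S \<noteq> {} \<and> S \<noteq> V \<longrightarrow> (\<exists>x\<in>V-S. P S (insert x S) > 0)"
    and mart: "\<forall>S\<in>Pow V. (\<Sum>T\<in>Pow V. P S T * M T) = M S"
    and M0: "M {} = 0" and MV: "M V > 0"
  shows "fix_prob V P v = M {v} / M V"
proof -
  define a where "a S = lim (\<lambda>n. nstep V P n S V)" for S
  have lim: "(\<lambda>n. nstep V P n S V) \<longlonglongrightarrow> a S" if S: "S \<in> Pow V" for S
  proof -
    have inc: "incseq (\<lambda>n. nstep V P n S V)"
      using nstep_mono[OF fin nn rs pvv] S by (intro incseq_SucI) blast
    have bd: "\<forall>i. nstep V P i S V \<le> 1" using nstep_bounds[OF fin nn rs] S by blast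
    obtain L where "(\<lambda>n. nstep V P n S V) \<longlonglongrightarrow> L" using incseq_convergent[OF inc bd] by blast
    then show ?thesis unfolding a_def by (simp add: limI)
  qed
  have harm: "\<forall>S\<in>Pow V. (\<Sum>T\<in>Pow V. P S T * a T) = a S"
  proof
    fix S assume S: "S \<in> Pow V"
    have "(\<lambda>n. nstep V P (Suc n) S V) \<longlonglongrightarrow> a S" using lim[OF S] by (rule LIMSEQ_Suc)
    moreover have "(\<lambda>n. nstep V P (Suc n) S V) \<longlonglongrightarrow> (\<Sum>T\<in>Pow V. P S T * a T)"
      unfolding nstep.simps
      by (intro tendsto_sum tendsto_mult_left lim) auto
    ultimately show "(\<Sum>T\<in>Pow V. P S T * a T) = a S" using LIMSEQ_unique by blast
  qed
  have aV: "a V = 1"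
  proof -
    have "(\<lambda>n. nstep V P n V V) \<longlonglongrightarrow> 1"
      using absorb_nstep[OF fin nn rs _ pvv] by simp
    then show ?thesis using lim[of V] LIMSEQ_unique by blast
  qed
  have a0: "a {} = 0"
  proof -
    have "V \<noteq> {}" using vV by blast
    then have "(\<lambda>n. nstep V P n {} V) \<longlonglongrightarrow> 0"
      using absorb_nstep[OF fin nn rs _ p00] by simp
    then show ?thesis using lim[of "{}"] LIMSEQ_unique by blast
  qed
  define g where "g S = a S - M S / M V" for S
  have harmg: "\<forall>S\<in>Pow V. (\<Sum>T\<in>Pow V. P S T * g T) = g S"
  proof
    fix S assume S: "S \<in> Pow V"
    have "(\<Sum>T\<in>Pow V. P S T * g T) = (\<Sum>T\<in>Pow V. P S T * a T) - (\<Sum>T\<in>Pow V. P S T * M T) / M V"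
      unfolding g_def by (simp add: algebra_simps sum_subtractf sum_divide_distrib)
    then show "(\<Sum>T\<in>Pow V. P S T * g T) = g S" using harm mart S unfolding g_def by simp
  qed
  have harmg': "\<forall>S\<in>Pow V. (\<Sum>T\<in>Pow V. P S T * (- g T)) = - g S"
    using harmg by (simp add: sum_negf)
  have gV: "g V = 0" and g0: "g {} = 0" unfolding g_def using aV a0 M0 MV by auto
  have "\<forall>S\<in>Pow V. g S \<le> 0" using max_principle[OF fin nn rs gr harmg] gV g0 by simp
  moreover have "\<forall>S\<in>Pow V. - g S \<le> 0"
    using max_principle[OF fin nn rs gr harmg', of ] gV g0 by simp
  moreover have vP: "{v} \<in> Pow V" using vV by simp
  ultimately have "g {v} \<le> 0" "- g {v} \<le> 0" by blast+
  then have "g {v} = 0" by linarith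
  then show ?thesis unfolding fix_prob_def using a_def g_def by simp
qed



lemma fit1[simp]: "fitness 1 S u = 1"
  by (simp add: fitness_def)

lemma repl_sub: "S \<subseteq> V \<Longrightarrow> x \<in> V \<Longrightarrow> replace_state S u x \<in> Pow V"
  by (auto simp: replace_state_def)

lemma delta_sum:
  fixes c :: real
  assumes "finite A" "g \<in> A"
  shows "(\<Sum>T\<in>A. c * (if g = T then 1 else 0) * h T) = c * h g"
proof -
  have "(\<Sum>T\<in>A. c * (if g = T then 1 else 0) * h T) = (\<Sum>T\<in>A. if g = T then c * h g else 0)"
    by (intro sum.cong) auto
  also have "\<dots> = c * h g" using assms by (simp add: sum.delta)
  finally show ?thesis .
qed

lemma triple_sum:
  fixes c :: "'a \<Rightarrow> 'a \<Rightarrow> real" and h :: "'a set \<Rightarrow> real"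
  assumes fin: "finite V" and gP: "\<And>u x. u \<in> V \<Longrightarrow> x \<in> V \<Longrightarrow> g u x \<in> Pow V"
  shows "(\<Sum>T\<in>Pow V. (\<Sum>u\<in>V. \<Sum>x\<in>V. c u x * (if g u x = T then 1 else 0)) * h T)
       = (\<Sum>u\<in>V. \<Sum>x\<in>V. c u x * h (g u x))"
proof -
  have "(\<Sum>T\<in>Pow V. (\<Sum>u\<in>V. \<Sum>x\<in>V. c u x * (if g u x = T then 1 else 0)) * h T)
      = (\<Sum>T\<in>Pow V. \<Sum>u\<in>V. \<Sum>x\<in>V. c u x * (if g u x = T then 1 else 0) * h T)"
    by (simp add: sum_distrib_right)
  also have "\<dots> = (\<Sum>u\<in>V. \<Sum>T\<in>Pow V. \<Sum>x\<in>V. c u x * (if g u x = T then 1 else 0) * h T)"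
    by (rule sum.swap)
  also have "\<dots> = (\<Sum>u\<in>V. \<Sum>x\<in>V. \<Sum>T\<in>Pow V. c u x * (if g u x = T then 1 else 0) * h T)"
    by (intro sum.cong refl sum.swap)
  also have "\<dots> = (\<Sum>u\<in>V. \<Sum>x\<in>V. c u x * h (g u x))"
    using fin gP by (intro sum.cong refl delta_sum) auto
  finally show ?thesis .
qed

lemma M_repl:
  fixes f :: "'a \<Rightarrow> real"
  assumes fin: "finite V" and S: "S \<subseteq> V" and x: "x \<in> V"
  shows "sum f (replace_state S u x) = sum f S +
    (if u \<in> S \<and> x \<notin> S then f x else if u \<notin> S \<and> x \<in> S then - f x else 0)"
proof -
  have fS: "finite S" using fin S finite_subset by blast
  show ?thesis
  proof (cases "u \<in> S")
    case True
    then show ?thesis using fS by (cases "x \<in> S") (auto simp: replace_state_def insert_absorb)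
  next
    case False
    then show ?thesis using fS by (cases "x \<in> S") (auto simp: replace_state_def sum_diff1)
  qed
qed

lemma antisym_sum:
  fixes k :: "'a \<Rightarrow> 'a \<Rightarrow> real"
  assumes fin: "finite V" and sym: "\<And>u x. k u x = k x u"
  shows "(\<Sum>u\<in>V. \<Sum>x\<in>V. (if u \<in> S \<and> x \<notin> S then k u x else if u \<notin> S \<and> x \<in> S then - k u x else 0)) = 0"
proof -
  define a where "a u x = (if u \<in> S \<and> x \<notin> S then k u x else 0)" for u x
  have "\<And>u x. (if u \<in> S \<and> x \<notin> S then k u x else if u \<notin> S \<and> x \<in> S then - k u x else 0) = a u x - a x u"
    unfolding a_def using sym by auto
  then have "(\<Sum>u\<in>V. \<Sum>x\<in>V. (if u \<in> S \<and> x \<notin> S then k u x else if u \<notin> S \<and> x \<in> S then - k u x else 0))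
      = (\<Sum>u\<in>V. \<Sum>x\<in>V. a u x) - (\<Sum>u\<in>V. \<Sum>x\<in>V. a x u)"
    by (simp add: sum_subtractf)
  also have "(\<Sum>u\<in>V. \<Sum>x\<in>V. a x u) = (\<Sum>u\<in>V. \<Sum>x\<in>V. a u x)" by (rule sum.swap)
  finally show ?thesis by simp
qed



lemma wdeg_nonneg: "(\<And>x y. w x y \<ge> 0) \<Longrightarrow> wdeg V w u \<ge> 0"
  unfolding wdeg_def by (simp add: sum_nonneg)

lemma Bd_unfold: "P_Bd V w 1 S T = (\<Sum>u\<in>V. \<Sum>x\<in>V. ((1 / real (card V)) * (w u x / wdeg V w u)) * (if replace_state S u x = T then 1 else 0))"
  unfolding P_Bd_def by simp

lemma Bd_rho:
  fixes w :: "'a \<Rightarrow> 'a \<Rightarrow> real"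
  assumes fin: "finite V" and vV: "v \<in> V"
    and sym: "\<And>x y. w x y = w y x" and wnn: "\<And>x y. w x y \<ge> 0"
    and dpos: "\<forall>u\<in>V. wdeg V w u > 0"
    and edge: "\<forall>S. S \<subseteq> V \<and> S \<noteq> {} \<and> S \<noteq> V \<longrightarrow> (\<exists>u\<in>S. \<exists>x\<in>V-S. w u x > 0)"
  shows "rho_Bd V w 1 v = (1 / wdeg V w v) / (\<Sum>u\<in>V. 1 / wdeg V w u)"
proof -
  define N where "N = real (card V)"
  have Npos: "N > 0" unfolding N_def using fin vV card_gt_0_iff by fastforce
  define d where "d = wdeg V w"
  define c where "c u x = (1 / N) * (w u x / d u)" for u x
  have unf: "\<And>S T. P_Bd V w 1 S T = (\<Sum>u\<in>V. \<Sum>x\<in>V. c u x * (if replace_state S u x = T then 1 else 0))"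
    unfolding Bd_unfold c_def N_def d_def ..
  have cnn: "\<And>u x. c u x \<ge> 0" unfolding c_def d_def using Npos wnn wdeg_nonneg[of w]
    by (simp add: divide_nonneg_nonneg)
  have csum: "(\<Sum>u\<in>V. \<Sum>x\<in>V. c u x) = 1"
  proof -
    have "\<And>u. u \<in> V \<Longrightarrow> (\<Sum>x\<in>V. c u x) = 1 / N"
    proof -
      fix u assume u: "u \<in> V"
      have "(\<Sum>x\<in>V. c u x) = (1 / N) * ((\<Sum>x\<in>V. w u x) / d u)"
        unfolding c_def by (simp add: sum_distrib_left sum_divide_distrib)
      also have "(\<Sum>x\<in>V. w u x) = d u" unfolding d_def wdeg_def ..
      finally show "(\<Sum>x\<in>V. c u x) = 1 / N" using dpos u unfolding d_def by (simp add: less_imp_neq[symmetric])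
    qed
    then have "(\<Sum>u\<in>V. \<Sum>x\<in>V. c u x) = (\<Sum>u\<in>V. 1 / N)" by simp
    also have "\<dots> = 1" using Npos unfolding N_def by simp
    finally show ?thesis .
  qed
  have sumP: "\<And>S h. S \<subseteq> V \<Longrightarrow> (\<Sum>T\<in>Pow V. P_Bd V w 1 S T * h T) = (\<Sum>u\<in>V. \<Sum>x\<in>V. c u x * h (replace_state S u x))"
    unfolding unf by (rule triple_sum[OF fin], rule repl_sub) auto
  have nn: "\<forall>S\<in>Pow V. \<forall>T\<in>Pow V. P_Bd V w 1 S T \<ge> 0"
    unfolding unf using cnn by (simp add: sum_nonneg)
  have rs: "\<forall>S\<in>Pow V. (\<Sum>T\<in>Pow V. P_Bd V w 1 S T) = 1"
    using sumP[of _ "\<lambda>_. 1"] csum by simp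
  have const: "\<And>S T0. (\<forall>u\<in>V. \<forall>x\<in>V. replace_state S u x = T0) \<Longrightarrow> P_Bd V w 1 S T0 = 1"
  proof -
    fix S T0 assume a: "\<forall>u\<in>V. \<forall>x\<in>V. replace_state S u x = T0"
    have "P_Bd V w 1 S T0 = (\<Sum>u\<in>V. \<Sum>x\<in>V. c u x)"
      unfolding unf using a by (intro sum.cong refl) simp
    then show "P_Bd V w 1 S T0 = 1" using csum by simp
  qed
  have pvv: "P_Bd V w 1 V V = 1" by (rule const) (auto simp: replace_state_def)
  have p00: "P_Bd V w 1 {} {} = 1" by (rule const) (auto simp: replace_state_def)
  have gr: "\<forall>S. S \<subseteq> V \<and> S \<noteq> {} \<and> S \<noteq> V \<longrightarrow> (\<exists>x\<in>V-S. P_Bd V w 1 S (insert x S) > 0)"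
  proof (intro allI impI)
    fix S assume S: "S \<subseteq> V \<and> S \<noteq> {} \<and> S \<noteq> V"
    then obtain u x where ux: "u \<in> S" "x \<in> V - S" "w u x > 0" using edge by blast
    have uV: "u \<in> V" using ux S by blast
    have cpos: "c u x > 0" unfolding c_def using Npos ux dpos uV unfolding d_def by simp
    have "c u x * (if replace_state S u x = insert x S then 1 else 0) \<le> (\<Sum>x'\<in>V. c u x' * (if replace_state S u x' = insert x S then 1 else 0))"
      using fin ux cnn by (intro member_le_sum) auto
    also have "\<dots> \<le> (\<Sum>u'\<in>V. \<Sum>x'\<in>V. c u' x' * (if replace_state S u' x' = insert x S then 1 else 0))"
      using fin uV cnn by (intro member_le_sum[where f = "\<lambda>u'. \<Sum>x'\<in>V. c u' x' * (if replace_state S u' x' = insert x S then 1 else 0)"] sum_nonneg) auto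
    finally have "c u x \<le> P_Bd V w 1 S (insert x S)"
      unfolding unf using ux by (simp add: replace_state_def)
    then show "\<exists>x\<in>V-S. P_Bd V w 1 S (insert x S) > 0" using cpos ux by force
  qed
  define f where "f y = 1 / d y" for y
  define M where "M S = sum f S" for S
  have mart: "\<forall>S\<in>Pow V. (\<Sum>T\<in>Pow V. P_Bd V w 1 S T * M T) = M S"
  proof
    fix S assume S: "S \<in> Pow V"
    define k where "k u x = w u x / (N * d u * d x)" for u x
    have ksym: "\<And>u x. k u x = k x u" unfolding k_def using sym by (simp add: mult_ac)
    have "(\<Sum>T\<in>Pow V. P_Bd V w 1 S T * M T) = (\<Sum>u\<in>V. \<Sum>x\<in>V. c u x * M (replace_state S u x))"
      using sumP S by simp
    also have "\<dots> = (\<Sum>u\<in>V. \<Sum>x\<in>V. c u x * M S +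
        (if u \<in> S \<and> x \<notin> S then k u x else if u \<notin> S \<and> x \<in> S then - k u x else 0))"
      using S fin unfolding M_def
      by (intro sum.cong refl) (auto simp: M_repl c_def k_def f_def algebra_simps)
    also have "\<dots> = M S * (\<Sum>u\<in>V. \<Sum>x\<in>V. c u x) +
        (\<Sum>u\<in>V. \<Sum>x\<in>V. (if u \<in> S \<and> x \<notin> S then k u x else if u \<notin> S \<and> x \<in> S then - k u x else 0))"
      by (simp add: sum.distrib sum_distrib_left mult_ac)
    also have "\<dots> = M S" using antisym_sum[OF fin ksym] csum by simp
    finally show "(\<Sum>T\<in>Pow V. P_Bd V w 1 S T * M T) = M S" .
  qed
  have M0: "M {} = 0" unfolding M_def by simp
  have MV: "M V > 0" unfolding M_def f_def d_def using fin vV dpos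
    by (intro sum_pos) auto
  have "rho_Bd V w 1 v = M {v} / M V"
    unfolding rho_Bd_def by (rule fix_prob_eq[OF fin vV nn rs pvv p00 gr mart M0 MV])
  then show ?thesis unfolding M_def f_def d_def by simp
qed



lemma dB_unfold: "P_dB V w 1 S T = (\<Sum>x\<in>V. \<Sum>u\<in>V. ((1 / real (card V)) * (w u x / (\<Sum>u'\<in>V. w u' x))) * (if replace_state S u x = T then 1 else 0))"
  unfolding P_dB_def by simp

lemma dB_rho:
  fixes w :: "'a \<Rightarrow> 'a \<Rightarrow> real"
  assumes fin: "finite V" and vV: "v \<in> V"
    and sym: "\<And>x y. w x y = w y x" and wnn: "\<And>x y. w x y \<ge> 0"
    and dpos: "\<forall>u\<in>V. wdeg V w u > 0"
    and edge: "\<forall>S. S \<subseteq> V \<and> S \<noteq> {} \<and> S \<noteq> V \<longrightarrow> (\<exists>u\<in>S. \<exists>x\<in>V-S. w u x > 0)"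
  shows "rho_dB V w 1 v = wdeg V w v / (\<Sum>u\<in>V. wdeg V w u)"
proof -
  define N where "N = real (card V)"
  have Npos: "N > 0" unfolding N_def using fin vV card_gt_0_iff by fastforce
  define d where "d = wdeg V w"
  have dsym: "\<And>x. (\<Sum>u'\<in>V. w u' x) = d x" unfolding d_def wdeg_def using sym by simp
  define c where "c x u = (1 / N) * (w u x / d x)" for u x
  have unf: "\<And>S T. P_dB V w 1 S T = (\<Sum>x\<in>V. \<Sum>u\<in>V. c x u * (if replace_state S u x = T then 1 else 0))"
    unfolding dB_unfold c_def N_def dsym ..
  have cnn: "\<And>u x. c u x \<ge> 0" unfolding c_def d_def using Npos wnn wdeg_nonneg[of w]
    by (simp add: divide_nonneg_nonneg)
  have csum: "(\<Sum>x\<in>V. \<Sum>u\<in>V. c x u) = 1"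
  proof -
    have "\<And>x. x \<in> V \<Longrightarrow> (\<Sum>u\<in>V. c x u) = 1 / N"
    proof -
      fix x assume x: "x \<in> V"
      have "(\<Sum>u\<in>V. c x u) = (1 / N) * ((\<Sum>u\<in>V. w u x) / d x)"
        unfolding c_def by (simp add: sum_distrib_left sum_divide_distrib)
      also have "(\<Sum>u\<in>V. w u x) = d x" by (rule dsym)
      finally show "(\<Sum>u\<in>V. c x u) = 1 / N" using dpos x unfolding d_def by (simp add: less_imp_neq[symmetric])
    qed
    then have "(\<Sum>x\<in>V. \<Sum>u\<in>V. c x u) = (\<Sum>x\<in>V. 1 / N)" by simp
    also have "\<dots> = 1" using Npos unfolding N_def by simp
    finally show ?thesis .
  qed
  have sumP: "\<And>S h. S \<subseteq> V \<Longrightarrow> (\<Sum>T\<in>Pow V. P_dB V w 1 S T * h T) = (\<Sum>x\<in>V. \<Sum>u\<in>V. c x u * h (replace_state S u x))"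
    unfolding unf by (rule triple_sum[OF fin], rule repl_sub) auto
  have nn: "\<forall>S\<in>Pow V. \<forall>T\<in>Pow V. P_dB V w 1 S T \<ge> 0"
    unfolding unf using cnn by (simp add: sum_nonneg)
  have rs: "\<forall>S\<in>Pow V. (\<Sum>T\<in>Pow V. P_dB V w 1 S T) = 1"
    using sumP[of _ "\<lambda>_. 1"] csum by simp
  have const: "\<And>S T0. (\<forall>u\<in>V. \<forall>x\<in>V. replace_state S u x = T0) \<Longrightarrow> P_dB V w 1 S T0 = 1"
  proof -
    fix S T0 assume a: "\<forall>u\<in>V. \<forall>x\<in>V. replace_state S u x = T0"
    have "P_dB V w 1 S T0 = (\<Sum>x\<in>V. \<Sum>u\<in>V. c x u)"
      unfolding unf using a by (intro sum.cong refl) simp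
    then show "P_dB V w 1 S T0 = 1" using csum by simp
  qed
  have pvv: "P_dB V w 1 V V = 1" by (rule const) (auto simp: replace_state_def)
  have p00: "P_dB V w 1 {} {} = 1" by (rule const) (auto simp: replace_state_def)
  have gr: "\<forall>S. S \<subseteq> V \<and> S \<noteq> {} \<and> S \<noteq> V \<longrightarrow> (\<exists>x\<in>V-S. P_dB V w 1 S (insert x S) > 0)"
  proof (intro allI impI)
    fix S assume S: "S \<subseteq> V \<and> S \<noteq> {} \<and> S \<noteq> V"
    then obtain u x where ux: "u \<in> S" "x \<in> V - S" "w u x > 0" using edge by blast
    have uV: "u \<in> V" using ux S by blast
    have xV: "x \<in> V" using ux by blast
    have cpos: "c x u > 0" unfolding c_def using Npos ux dpos xV unfolding d_def by simp
    have "c x u * (if replace_state S u x = insert x S then 1 else 0) \<le> (\<Sum>u'\<in>V. c x u' * (if replace_state S u' x = insert x S then 1 else 0))"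
      using fin uV cnn by (intro member_le_sum) auto
    also have "\<dots> \<le> (\<Sum>x'\<in>V. \<Sum>u'\<in>V. c x' u' * (if replace_state S u' x' = insert x S then 1 else 0))"
      using fin xV cnn by (intro member_le_sum[where f = "\<lambda>x'. \<Sum>u'\<in>V. c x' u' * (if replace_state S u' x' = insert x S then 1 else 0)"] sum_nonneg) auto
    finally have "c x u \<le> P_dB V w 1 S (insert x S)"
      unfolding unf using ux by (simp add: replace_state_def)
    then show "\<exists>x\<in>V-S. P_dB V w 1 S (insert x S) > 0" using cpos ux by force
  qed
  define M where "M S = sum d S" for S
  have mart: "\<forall>S\<in>Pow V. (\<Sum>T\<in>Pow V. P_dB V w 1 S T * M T) = M S"
  proof
    fix S assume S: "S \<in> Pow V"
    define k where "k u x = w u x / N" for u x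
    have ksym: "\<And>u x. k u x = k x u" unfolding k_def using sym by simp
    have "(\<Sum>T\<in>Pow V. P_dB V w 1 S T * M T) = (\<Sum>x\<in>V. \<Sum>u\<in>V. c x u * M (replace_state S u x))"
      using sumP S by simp
    also have "\<dots> = (\<Sum>x\<in>V. \<Sum>u\<in>V. c x u * M S +
        (if u \<in> S \<and> x \<notin> S then k u x else if u \<notin> S \<and> x \<in> S then - k u x else 0))"
    proof (intro sum.cong refl)
      fix x u assume x: "x \<in> V" and u: "u \<in> V"
      have dx: "d x \<noteq> 0" using dpos x unfolding d_def by (simp add: less_imp_neq[symmetric])
      show "c x u * M (replace_state S u x) = c x u * M S +
        (if u \<in> S \<and> x \<notin> S then k u x else if u \<notin> S \<and> x \<in> S then - k u x else 0)"
        using S fin x dx unfolding M_def by (auto simp: M_repl c_def k_def algebra_simps)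
    qed
    also have "\<dots> = M S * (\<Sum>x\<in>V. \<Sum>u\<in>V. c x u) +
        (\<Sum>x\<in>V. \<Sum>u\<in>V. (if u \<in> S \<and> x \<notin> S then k u x else if u \<notin> S \<and> x \<in> S then - k u x else 0))"
      by (simp add: sum.distrib sum_distrib_left mult_ac)
    also have "(\<Sum>x\<in>V. \<Sum>u\<in>V. (if u \<in> S \<and> x \<notin> S then k u x else if u \<notin> S \<and> x \<in> S then - k u x else 0))
       = (\<Sum>u\<in>V. \<Sum>x\<in>V. (if u \<in> S \<and> x \<notin> S then k u x else if u \<notin> S \<and> x \<in> S then - k u x else 0))"
      by (rule sum.swap)
    also have "M S * (\<Sum>x\<in>V. \<Sum>u\<in>V. c x u) + \<dots> = M S" using antisym_sum[OF fin ksym] csum by simp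
    finally show "(\<Sum>T\<in>Pow V. P_dB V w 1 S T * M T) = M S" .
  qed
  have M0: "M {} = 0" unfolding M_def by simp
  have MV: "M V > 0" unfolding M_def d_def using fin vV dpos
    by (intro sum_pos) auto
  have "rho_dB V w 1 v = M {v} / M V"
    unfolding rho_dB_def by (rule fix_prob_eq[OF fin vV nn rs pvv p00 gr mart M0 MV])
  then show ?thesis unfolding M_def d_def by simp
qed



lemma conn_edge:
  assumes c: "connected_wgraph V w" and S: "S \<subseteq> V" "S \<noteq> {}" "S \<noteq> V"
  shows "\<exists>u\<in>S. \<exists>x\<in>V-S. w u x > 0"
proof -
  obtain s where s: "s \<in> S" using S by blast
  obtain t where t: "t \<in> V - S" using S by blast
  let ?E = "{(a, b). a \<in> V \<and> b \<in> V \<and> w a b > 0}"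
  have st: "(s, t) \<in> ?E\<^sup>*" using c s t S unfolding connected_wgraph_def by blast
  have "\<And>y. (s, y) \<in> ?E\<^sup>* \<Longrightarrow> y \<notin> S \<Longrightarrow> \<exists>u\<in>S. \<exists>x\<in>V-S. w u x > 0"
  proof -
    fix y assume "(s, y) \<in> ?E\<^sup>*"
    then show "y \<notin> S \<Longrightarrow> \<exists>u\<in>S. \<exists>x\<in>V-S. w u x > 0"
    proof (induction rule: rtrancl_induct)
      case base
      then show ?case using s by blast
    next
      case (step y z)
      show ?case
      proof (cases "y \<in> S")
        case True
        then show ?thesis using step by blast
      next
        case False
        then show ?thesis using step.IH by blast
      qed
    qed
  qed
  then show ?thesis using st t by blast
qed

lemma conn_dpos:
  assumes c: "connected_wgraph V w" and fin: "finite V" and two: "card V \<ge> 2"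
    and wnn: "\<And>x y. w x y \<ge> 0"
  shows "\<forall>u\<in>V. wdeg V w u > 0"
proof
  fix u assume u: "u \<in> V"
  have "card (V - {u}) \<ge> 1" using two u fin by (simp add: card_Diff_singleton)
  then have "V - {u} \<noteq> {}" by (intro notI) simp
  then obtain y where y: "y \<in> V" "y \<noteq> u" by blast
  let ?E = "{(a, b). a \<in> V \<and> b \<in> V \<and> w a b > 0}"
  have uy: "(u, y) \<in> ?E\<^sup>*" using c u y unfolding connected_wgraph_def by blast
  have "\<exists>z. (u, z) \<in> ?E" using uy
    by (rule converse_rtranclE) (use y(2) in blast)+
  then obtain z where z: "(u, z) \<in> ?E" by blast
  then have zV: "z \<in> V" and wz: "w u z > 0" by auto
  have "w u z \<le> wdeg V w u" unfolding wdeg_def using fin zV wnn by (intro member_le_sum) auto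
  then show "wdeg V w u > 0" using wz by linarith
qed

lemma single_rho:
  fixes w :: "'a \<Rightarrow> 'a \<Rightarrow> real"
  assumes w0: "w v v = 0"
  shows "rho_Bd {v} w 1 v = 0 \<and> rho_dB {v} w 1 v = 0"
proof -
  have pb: "P_Bd {v} w 1 S T = 0" for S T unfolding P_Bd_def using w0 by simp
  have pd: "P_dB {v} w 1 S T = 0" for S T unfolding P_dB_def using w0 by simp
  have zb: "nstep {v} (P_Bd {v} w 1) (Suc n) S T = 0" for n S T using pb by simp
  have zd: "nstep {v} (P_dB {v} w 1) (Suc n) S T = 0" for n S T using pd by simp
  have "(\<lambda>n. nstep {v} (P_Bd {v} w 1) n {v} {v}) \<longlonglongrightarrow> 0"
    by (rule LIMSEQ_imp_Suc) (simp only: zb, rule tendsto_const)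
  moreover have "(\<lambda>n. nstep {v} (P_dB {v} w 1) n {v} {v}) \<longlonglongrightarrow> 0"
    by (rule LIMSEQ_imp_Suc) (simp only: zd, rule tendsto_const)
  ultimately show ?thesis unfolding rho_Bd_def rho_dB_def fix_prob_def by (simp add: limI)
qed

lemma K_wdeg: "u < N \<Longrightarrow> wdeg {0..<N} K_weight u = real N - 1"
proof -
  assume u: "u < N"
  have "wdeg {0..<N} K_weight u = (\<Sum>x\<in>{0..<N}. 1 - (if u = x then 1 else 0))"
    unfolding wdeg_def K_weight_def by (rule sum.cong) auto
  also have "\<dots> = real N - 1" using u by (simp add: sum_subtractf)
  finally show ?thesis .
qed

lemma K_rho:
  assumes N: "N \<ge> 2"
  shows "rho_Bd_K N 1 = 1 / real N \<and> rho_dB_K N 1 = 1 / real N"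
proof -
  have sym: "\<And>x y. K_weight x y = K_weight y x" unfolding K_weight_def by auto
  have nn: "\<And>x y. K_weight x y \<ge> 0" unfolding K_weight_def by auto
  have dpos: "\<forall>u\<in>{0..<N}. wdeg {0..<N} K_weight u > 0" using K_wdeg N by auto
  have edge: "\<forall>S. S \<subseteq> {0..<N} \<and> S \<noteq> {} \<and> S \<noteq> {0..<N} \<longrightarrow> (\<exists>u\<in>S. \<exists>x\<in>{0..<N}-S. K_weight u x > 0)"
  proof (intro allI impI)
    fix S assume S: "S \<subseteq> {0..<N} \<and> S \<noteq> {} \<and> S \<noteq> {0..<N}"
    then obtain u x where ux: "u \<in> S" "x \<in> {0..<N} - S" by blast
    then have "u \<noteq> x" by blast
    then have "K_weight u x > 0" unfolding K_weight_def by simp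
    then show "\<exists>u\<in>S. \<exists>x\<in>{0..<N}-S. K_weight u x > 0" using ux by blast
  qed
  have z: "(0::nat) \<in> {0..<N}" using N by simp
  have dd: "\<And>u. u \<in> {0..<N} \<Longrightarrow> wdeg {0..<N} K_weight u = real N - 1" using K_wdeg by simp
  have N1: "real N - 1 > 0" using N by simp
  have "rho_Bd_K N 1 = (1 / (real N - 1)) / (\<Sum>u\<in>{0..<N}. 1 / (real N - 1))"
    unfolding rho_Bd_K_def using Bd_rho[OF _ z sym nn dpos edge] dd z by simp
  also have "\<dots> = 1 / real N" using N1 by (simp add: field_simps)
  finally have a: "rho_Bd_K N 1 = 1 / real N" .
  have "rho_dB_K N 1 = (real N - 1) / (\<Sum>u\<in>{0..<N}. (real N - 1))"
    unfolding rho_dB_K_def using dB_rho[OF _ z sym nn dpos edge] dd z by simp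
  also have "\<dots> = 1 / real N" using N1 by (simp add: field_simps)
  finally show ?thesis using a by simp
qed

lemma cs_ineq:
  fixes d :: "'a \<Rightarrow> real"
  assumes fin: "finite V" and pos: "\<forall>u\<in>V. d u > 0"
  shows "(\<Sum>u\<in>V. 1 / d u) * (\<Sum>u\<in>V. d u) \<ge> real (card V) ^ 2"
proof -
  have key: "\<And>a b::real. a > 0 \<Longrightarrow> b > 0 \<Longrightarrow> a / b + b / a \<ge> 2"
  proof -
    fix a b :: real assume a: "a > 0" and b: "b > 0"
    have "(a - b)^2 \<ge> 0" by simp
    then have "a * a + b * b \<ge> 2 * (a * b)" by (simp add: power2_eq_square algebra_simps)
    then show "a / b + b / a \<ge> 2" using a b by (simp add: field_simps)
  qed
  have "(\<Sum>u\<in>V. 1 / d u) * (\<Sum>u\<in>V. d u) = (\<Sum>u\<in>V. \<Sum>x\<in>V. d x / d u)"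
    by (simp add: sum_product)
  moreover have "(\<Sum>u\<in>V. \<Sum>x\<in>V. d x / d u) = (\<Sum>u\<in>V. \<Sum>x\<in>V. d u / d x)" by (rule sum.swap)
  moreover have "(\<Sum>u\<in>V. \<Sum>x\<in>V. d x / d u) + (\<Sum>u\<in>V. \<Sum>x\<in>V. d u / d x) \<ge> (\<Sum>u\<in>V. \<Sum>x\<in>V. 2)"
    unfolding sum.distrib[symmetric] using key pos by (intro sum_mono) auto
  moreover have "(\<Sum>u\<in>V. \<Sum>x\<in>V. (2::real)) = 2 * real (card V) ^ 2"
    by (simp add: power2_eq_square)
  ultimately show ?thesis by linarith
qed



theorem theorem1:
  fixes V :: "'a set" and w :: "'a \<Rightarrow> 'a \<Rightarrow> real" and v :: 'a and N :: nat
  assumes "finite V" and "card V = N" and "v \<in> V"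
    and "\<And>x y. w x y = w y x"
    and "\<And>x y. w x y \<ge> 0"
    and "\<And>x. w x x = 0"
    and "connected_wgraph V w"
  shows "rho_Bd V w 1 v < rho_Bd_K N 1
       \<or> rho_dB V w 1 v < rho_dB_K N 1
       \<or> (rho_Bd V w 1 v = rho_Bd_K N 1 \<and> rho_dB V w 1 v = rho_dB_K N 1)"
proof (cases "N = 1")
  case True
  then obtain a where "V = {a}" using assms(2) card_1_singletonE by blast
  then have Vv: "V = {v}" using assms(3) by blast
  have g: "rho_Bd V w 1 v = 0 \<and> rho_dB V w 1 v = 0" unfolding Vv by (rule single_rho) (rule assms(6))
  have K0: "{0..<N} = {0::nat}" using True by auto
  have "K_weight 0 0 = 0" unfolding K_weight_def by simp
  then have k: "rho_Bd {0} K_weight 1 0 = 0 \<and> rho_dB {0} K_weight 1 0 = 0" by (rule single_rho)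
  show ?thesis unfolding rho_Bd_K_def rho_dB_K_def K0 using g k by simp
next
  case False
  have fin: "finite V" by fact
  have "N \<noteq> 0" using assms(1-3) card_gt_0_iff by fastforce
  then have N2: "N \<ge> 2" using False by simp
  have dpos: "\<forall>u\<in>V. wdeg V w u > 0"
    using conn_dpos[OF assms(7) fin] N2 assms(2,5) by simp
  have edge: "\<forall>S. S \<subseteq> V \<and> S \<noteq> {} \<and> S \<noteq> V \<longrightarrow> (\<exists>u\<in>S. \<exists>x\<in>V-S. w u x > 0)"
    using conn_edge[OF assms(7)] by blast
  define d where "d = wdeg V w"
  define A where "A = (\<Sum>u\<in>V. 1 / d u)"
  define B where "B = (\<Sum>u\<in>V. d u)"
  have rB: "rho_Bd V w 1 v = (1 / d v) / A"
    unfolding A_def d_def by (rule Bd_rho[OF fin assms(3) assms(4) assms(5) dpos edge])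
  have rD: "rho_dB V w 1 v = d v / B"
    unfolding B_def d_def by (rule dB_rho[OF fin assms(3) assms(4) assms(5) dpos edge])
  have K: "rho_Bd_K N 1 = 1 / real N" "rho_dB_K N 1 = 1 / real N" using K_rho[OF N2] by auto
  have dpos': "\<forall>u\<in>V. d u > 0" using dpos unfolding d_def .
  have dv: "d v > 0" using dpos' assms(3) by blast
  have Apos: "A > 0" unfolding A_def using fin assms(3) dpos' by (intro sum_pos) auto
  have Bpos: "B > 0" unfolding B_def using fin assms(3) dpos' by (intro sum_pos) auto
  have cs: "A * B \<ge> real N ^ 2" unfolding A_def B_def using cs_ineq[OF fin dpos'] assms(2) by simp
  have Npos: "real N > 0" using N2 by simp
  show ?thesis
  proof (cases "rho_Bd V w 1 v < rho_Bd_K N 1 \<or> rho_dB V w 1 v < rho_dB_K N 1")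
    case True
    then show ?thesis by blast
  next
    case False
    then have h1': "1 / real N \<le> (1 / d v) / A" and h2': "1 / real N \<le> d v / B"
      using rB rD K by auto
    have h1: "d v * A \<le> real N" using h1' dv Apos Npos by (simp add: field_simps)
    have h2: "B \<le> real N * d v" using h2' Bpos Npos by (simp add: field_simps)
    have e1: "d v * A * B \<le> real N * B" using h1 Bpos by (simp add: mult_right_mono)
    have e2: "real N * B \<le> real N * (real N * d v)" using h2 Npos by (simp add: mult_left_mono)
    have e3: "d v * real N ^ 2 \<le> d v * (A * B)" using cs dv by (simp add: mult_left_mono)
    have eqB: "B = real N * d v"
    proof -
      have q: "real N * (real N * d v) = d v * real N ^ 2" by (simp add: power2_eq_square)
      have e1': "d v * (A * B) \<le> real N * B" using e1 by (simp add: mult.assoc)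
      have "real N * B = real N * (real N * d v)" using e1' e2 e3 q by linarith
      then show ?thesis using Npos by simp
    qed
    have eqA: "d v * A = real N"
    proof -
      have q: "real N * (real N * d v) = d v * real N ^ 2" by (simp add: power2_eq_square)
      have e1': "d v * (A * B) \<le> real N * B" using e1 by (simp add: mult.assoc)
      have "d v * (A * B) = real N * B" using e1' e2 e3 q by linarith
      then have "d v * A * B = real N * B" by (simp add: mult.assoc)
      then show ?thesis using Bpos by simp
    qed
    have "rho_Bd V w 1 v = 1 / real N" using rB eqA dv by (simp add: field_simps)
    moreover have "rho_dB V w 1 v = 1 / real N" using rD eqB dv Npos by (simp add: field_simps)
    ultimately show ?thesis using K by simp
  qed
qed


end
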